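(* Let $G=(V,E)$ be a finite, undirected, unweighted, connected graph, let $P=(v_{i_1},\dots,v_{i_k})$ be a shortest walk in $G$ visiting every vertex at least once, and let $\ell\ge1$. The CNOT cost of the circuit applying the quantum hashing algorithm $\ell$ times with the path strategy (described in the context) is at most $(3k-4)\ell+2$.
   Context: A walk is a sequence of vertices with consecutive entries adjacent (repetitions allowed); its length is the number of entries. Each vertex carries one physical qubit; two-qubit gates only act on qubits at adjacent vertices. $CR_y(\xi)=\mathrm{diag}(I,R_y(\xi))$; SWAP exchanges two qubits. Single application along a walk $(x_1,\dots,x_k)$: target starts on $x_2$; $U=\emptyset$; apply $CR_y$ (control $x_1$, target $x_2$), add $x_1$ to $U$, $j=2$; loop: if $x_{j+1}\notin U$ apply $CR_y$ (control $x_{j+1}$, target $x_j$) and add $x_{j+1}$ to $U$; if $j=k-1$ stop; else if $x_{j+2}=x_j$ set $j\leftarrow j+2$, otherwise apply SWAP to $x_j,x_{j+1}$ and set $j\leftarrow j+1$; repeat. Path strategy: the applications alternately use $P$ and its reversal $(v_{i_k},\dots,v_{i_1})$; the last $CR_y$ of one application and the first $CR_y$ of the next act on the same control/target pair and are merged into a single $CR_y$ gate. CNOT cost: number of CNOTs after decomposition, counting each $CR_y$ as 2, each SWAP as 3, a $CR_y$ immediately followed by a SWAP on the same two qubits as 3 in total, single-qubit gates as 0. *)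

theory Defs
  imports Main
begin

definition simple_graph :: "'a set \<Rightarrow> ('a \<Rightarrow> 'a \<Rightarrow> bool) \<Rightarrow> bool" where
  "simple_graph V E \<longleftrightarrow> finite V \<and> (\<forall>u v. E u v \<longrightarrow> u \<in> V \<and> v \<in> V)
     \<and> (\<forall>u v. E u v \<longrightarrow> E v u) \<and> (\<forall>v. \<not> E v v)"

definition connected_graph :: "'a set \<Rightarrow> ('a \<Rightarrow> 'a \<Rightarrow> bool) \<Rightarrow> bool" where
  "connected_graph V E \<longleftrightarrow> (\<forall>u\<in>V. \<forall>v\<in>V. E\<^sup>*\<^sup>* u v)"

definition is_walk :: "'a set \<Rightarrow> ('a \<Rightarrow> 'a \<Rightarrow> bool) \<Rightarrow> 'a list \<Rightarrow> bool" where
  "is_walk V E xs \<longleftrightarrow> xs \<noteq> [] \<and> set xs \<subseteq> V \<and>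
     (\<forall>i. i + 1 < length xs \<longrightarrow> E (xs ! i) (xs ! (i + 1)))"

definition shortest_covering_walk :: "'a set \<Rightarrow> ('a \<Rightarrow> 'a \<Rightarrow> bool) \<Rightarrow> 'a list \<Rightarrow> bool" where
  "shortest_covering_walk V E xs \<longleftrightarrow> is_walk V E xs \<and> set xs = V \<and>
     (\<forall>ys. is_walk V E ys \<and> set ys = V \<longrightarrow> length xs \<le> length ys)"

(* Gates acting on the qubits at given vertices. CRy c t: control c, target t
   (the rotation angle does not affect the CNOT cost and is omitted). *)
datatype 'a gate = CRy 'a 'a | SWAP 'a 'a

(* The loop of a single application; j is the 1-based index, x_i = xs ! (i - 1).
   The guard "length xs < j + 1" only makes the function total. *)
function app_loop :: "'a list \<Rightarrow> 'a set \<Rightarrow> nat \<Rightarrow> 'a gate list" where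
  "app_loop xs U j =
    (if length xs < j + 1 \<or> j < 1 then []
     else
       (if xs ! j \<notin> U then [CRy (xs ! j) (xs ! (j - 1))] else []) @
       (let U' = insert (xs ! j) U in
        if j = length xs - 1 then []
        else if xs ! (j + 1) = xs ! (j - 1) then app_loop xs U' (j + 2)
        else SWAP (xs ! (j - 1)) (xs ! j) # app_loop xs U' (j + 1)))"
  by pat_completeness auto
termination
  by (relation "measure (\<lambda>(xs, U, j). length xs - j)") auto

definition single_application :: "'a list \<Rightarrow> 'a gate list" where
  "single_application xs = CRy (xs ! 0) (xs ! 1) # app_loop xs {xs ! 0} 2"

(* Path strategy, l applications, alternately P and rev P; the first CRy of each
   subsequent application is merged into the last CRy of the previous one. *)
fun path_strategy_apps :: "'a list \<Rightarrow> nat \<Rightarrow> 'a gate list" where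
  "path_strategy_apps P 0 = []"
| "path_strategy_apps P (Suc 0) = single_application P"
| "path_strategy_apps P (Suc (Suc n)) =
     path_strategy_apps P (Suc n) @
     tl (single_application (if even (Suc n) then P else rev P))"

fun cnot_cost :: "'a gate list \<Rightarrow> nat" where
  "cnot_cost [] = 0"
| "cnot_cost (CRy a b # SWAP c d # gs) =
     (if {a, b} = {c, d} then 3 + cnot_cost gs else 2 + cnot_cost (SWAP c d # gs))"
| "cnot_cost (CRy a b # gs) = 2 + cnot_cost gs"
| "cnot_cost (SWAP a b # gs) = 3 + cnot_cost gs"

end

theory Submission
  imports Defs
begin

declare app_loop.simps[simp del]

lemma cost_cry_le: "cnot_cost (CRy a b # gs) \<le> 2 + cnot_cost gs"
  by (cases gs rule: cnot_cost.cases) auto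

lemma cost_append: "cnot_cost (xs @ ys) \<le> cnot_cost xs + cnot_cost ys"
proof (induction xs rule: cnot_cost.induct)
  case (2 a b c d gs)
  then show ?case using cost_cry_le[of a b "SWAP c d # gs @ ys"] by auto
next
  case ("3_1" a b)
  then show ?case using cost_cry_le[of a b ys] by simp
next
  case ("3_2" a b v va gs)
  then show ?case using cost_cry_le[of a b "(CRy v va # gs) @ ys"] by simp
qed auto

lemma loop_bound: "1 \<le> j \<Longrightarrow> cnot_cost (app_loop xs U j) \<le> 3 * (length xs - 1 - j) + 2"
proof (induction xs U j rule: app_loop.induct)
  case (1 xs U j)
  show ?case
  proof (cases "length xs < j + 1")
    case True
    then show ?thesis by (subst app_loop.simps) simp
  next
    case False
    define c where "c = (if xs ! j \<notin> U then [CRy (xs ! j) (xs ! (j - 1))] else [])"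
    have c: "cnot_cost c \<le> 2" unfolding c_def by simp
    show ?thesis
    proof (cases "j = length xs - 1")
      case True
      then show ?thesis using False c 1(3) by (subst app_loop.simps) (simp add: c_def[symmetric])
    next
      case nj: False
      show ?thesis
      proof (cases "xs ! (j + 1) = xs ! (j - 1)")
        case True
        have IH: "cnot_cost (app_loop xs (insert (xs ! j) U) (j + 2)) \<le> 3 * (length xs - 1 - (j+2)) + 2"
          using 1(1)[OF _ _ nj True] False 1(3) by simp
        have "cnot_cost (app_loop xs U j) = cnot_cost (c @ app_loop xs (insert (xs ! j) U) (j + 2))"
          using False nj True 1(3) by (subst app_loop.simps) (simp add: c_def[symmetric] Let_def)
        also have "\<dots> \<le> 2 + (3 * (length xs - 1 - (j+2)) + 2)"
          using cost_append[of c "app_loop xs (insert (xs ! j) U) (j + 2)"] c IH by linarith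
        also have "\<dots> \<le> 3 * (length xs - 1 - j) + 2" using False nj by simp
        finally show ?thesis .
      next
        case nt: False
        have IH: "cnot_cost (app_loop xs (insert (xs ! j) U) (j + 1)) \<le> 3 * (length xs - 1 - (j+1)) + 2"
          using 1(2)[OF _ _ nj nt] False 1(3) by simp
        have c2: "cnot_cost (c @ [SWAP (xs ! (j - 1)) (xs ! j)]) \<le> 3"
          unfolding c_def by auto
        have "cnot_cost (app_loop xs U j) = cnot_cost ((c @ [SWAP (xs ! (j - 1)) (xs ! j)]) @ app_loop xs (insert (xs ! j) U) (j + 1))"
          using False nj nt 1(3) by (subst app_loop.simps) (simp add: c_def[symmetric] Let_def)
        also have "\<dots> \<le> 3 + (3 * (length xs - 1 - (j+1)) + 2)"
          using cost_append[of "c @ [SWAP (xs ! (j - 1)) (xs ! j)]" "app_loop xs (insert (xs ! j) U) (j + 1)"] c2 IH by linarith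
        also have "\<dots> \<le> 3 * (length xs - 1 - j) + 2" using False nj by simp
        finally show ?thesis .
      qed
    qed
  qed
qed

lemma tl_single: "cnot_cost (tl (single_application xs)) \<le> 3 * (length xs - 3) + 2"
proof -
  have "cnot_cost (app_loop xs {xs ! 0} 2) \<le> 3 * (length xs - 1 - 2) + 2" by (rule loop_bound) simp
  moreover have "length xs - 1 - 2 = length xs - 3" by simp
  ultimately show ?thesis unfolding single_application_def by simp
qed

lemma single: "cnot_cost (single_application xs) \<le> 2 + (3 * (length xs - 3) + 2)"
proof -
  have "cnot_cost (app_loop xs {xs ! 0} 2) \<le> 3 * (length xs - 1 - 2) + 2" by (rule loop_bound) simp
  moreover have "length xs - 1 - 2 = length xs - 3" by simp
  ultimately show ?thesis unfolding single_application_def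
    using cost_cry_le[of "xs ! 0" "xs ! 1" "app_loop xs {xs ! 0} 2"] by linarith
qed

lemma apps_bound: "n \<ge> 1 \<Longrightarrow> cnot_cost (path_strategy_apps P n) \<le> 2 + n * (3 * (length P - 3) + 2)"
proof (induction P n rule: path_strategy_apps.induct)
  case (1 P)
  then show ?case by simp
next
  case (2 P)
  then show ?case using single[of P] by simp
next
  case (3 P n)
  have t: "cnot_cost (tl (single_application (if even (Suc n) then P else rev P))) \<le> 3 * (length P - 3) + 2"
    using tl_single[of P] tl_single[of "rev P"] by auto
  have "cnot_cost (path_strategy_apps P (Suc (Suc n))) \<le> cnot_cost (path_strategy_apps P (Suc n)) + (3 * (length P - 3) + 2)"
    using cost_append[of "path_strategy_apps P (Suc n)" "tl (single_application (if even (Suc n) then P else rev P))"] t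
    by (simp only: path_strategy_apps.simps)
  then show ?case using 3 by simp
qed

theorem theorem4:
  fixes V :: "'a set" and E :: "'a \<Rightarrow> 'a \<Rightarrow> bool" and P :: "'a list" and l :: nat
  assumes "simple_graph V E"
    and "connected_graph V E"
    and "card V \<ge> 2"
    and "shortest_covering_walk V E P"
    and "l \<ge> 1"
  shows "int (cnot_cost (path_strategy_apps P l)) \<le> (3 * int (length P) - 4) * int l + 2"
proof -
  have "set P = V" using assms(4) unfolding shortest_covering_walk_def by simp
  then have k: "length P \<ge> 2" using assms(3) card_length[of P] by simp
  have "3 * (length P - 3) + 2 \<le> 3 * length P - 4" using k by simp
  then have "int (3 * (length P - 3) + 2) \<le> 3 * int (length P) - 4" using k by linarith
  then have "int (3 * (length P - 3) + 2) * int l \<le> (3 * int (length P) - 4) * int l"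
    by (simp add: mult_right_mono)
  moreover have "int (cnot_cost (path_strategy_apps P l)) \<le> 2 + int l * int (3 * (length P - 3) + 2)"
    using of_nat_mono[OF apps_bound[OF assms(5), of P], where 'a=int] by (simp only: of_nat_add of_nat_mult mult.commute of_nat_numeral)
  ultimately show ?thesis by (simp add: algebra_simps)
qed

end
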